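(* Let $r\ge 3$, $k\ge 2r+13$, $m=\lfloor (k-1)/2\rfloor$, $f(n)=\binom{m}{r-1}(n-m)+\binom{m}{r}+\mathbb{1}_{2\mid k}\binom{m}{r-2}$, and $$N_{k,r}=\binom{r(k-1)}{r}+\binom{m}{r-1}m-\binom{m}{r}-\mathbb{1}_{2\mid k}\binom{m}{r-2}+r(k-1).$$ Let $n>N_{k,r}$ and let $\mathcal H$ be an $n$-vertex $r$-graph with no Berge-path of length $k$ and with at least $f(n)$ hyperedges. Let $\mathcal H'$ be obtained from $\mathcal H$ by repeatedly deleting a vertex whose degree in the current hypergraph is less than $\binom{m}{r-1}$, together with all hyperedges containing it, until no such vertex remains. Then $\mathcal H'$ has at least $r(k-1)$ vertices and minimum degree at least $\binom{m}{r-1}$.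
   Context: An $r$-graph is a simple $r$-uniform hypergraph; the degree of a vertex is the number of hyperedges containing it. A Berge-path of length $t$ is an alternating sequence $v_1,e_1,\dots,e_t,v_{t+1}$ of $t+1$ distinct vertices and $t$ distinct hyperedges with $\{v_i,v_{i+1}\}\subseteq e_i$. $\mathbb{1}_{2\mid k}$ is $1$ if $k$ is even and $0$ otherwise. *)

theory Defs
  imports Main
begin

definition r_graph :: "nat \<Rightarrow> 'a set \<Rightarrow> 'a set set \<Rightarrow> bool" where
  "r_graph r V E \<longleftrightarrow> finite V \<and> (\<forall>e\<in>E. e \<subseteq> V \<and> card e = r)"

definition hdegree :: "'a set set \<Rightarrow> 'a \<Rightarrow> nat" where
  "hdegree E v = card {e \<in> E. v \<in> e}"

definition berge_path :: "'a set \<Rightarrow> 'a set set \<Rightarrow> nat \<Rightarrow> 'a list \<Rightarrow> 'a set list \<Rightarrow> bool" where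
  "berge_path V E t vs es \<longleftrightarrow>
     length vs = t + 1 \<and> length es = t \<and> distinct vs \<and> distinct es \<and>
     set vs \<subseteq> V \<and> set es \<subseteq> E \<and>
     (\<forall>i<t. {vs ! i, vs ! (i+1)} \<subseteq> es ! i)"

definition has_berge_path :: "'a set \<Rightarrow> 'a set set \<Rightarrow> nat \<Rightarrow> bool" where
  "has_berge_path V E t \<longleftrightarrow> (\<exists>vs es. berge_path V E t vs es)"

definition peel_step :: "nat \<Rightarrow> ('a set \<times> 'a set set) \<Rightarrow> ('a set \<times> 'a set set) \<Rightarrow> bool" where
  "peel_step d H H' \<longleftrightarrow> (\<exists>v\<in>fst H. hdegree (snd H) v < d \<and>
      H' = (fst H - {v}, {e \<in> snd H. v \<notin> e}))"

definition peel_result :: "nat \<Rightarrow> ('a set \<times> 'a set set) \<Rightarrow> ('a set \<times> 'a set set) \<Rightarrow> bool" where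
  "peel_result d H H' \<longleftrightarrow> (peel_step d)\<^sup>*\<^sup>* H H' \<and> (\<forall>v\<in>fst H'. d \<le> hdegree (snd H') v)"

end

theory Submission
  imports Defs
begin

lemma choose_mono_n: "(a::nat) \<le> b \<Longrightarrow> a choose r \<le> b choose r"
proof -
  assume ab: "a \<le> b"
  have "card {K. K \<subseteq> {..<a} \<and> card K = r} \<le> card {K. K \<subseteq> {..<b} \<and> card K = r}"
    by (rule card_mono) (use ab in auto)
  thus ?thesis by (simp add: n_subsets)
qed

lemma peel_inv:
  assumes "(peel_step d)\<^sup>*\<^sup>* (V, E) H" "r_graph r V E"
  shows "r_graph r (fst H) (snd H) \<and> fst H \<subseteq> V \<and>
         int (card (snd H)) \<ge> int (card E) - (int d - 1) * int (card V - card (fst H))"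
  using assms(1)
proof (induction rule: rtranclp_induct)
  case base
  then show ?case using assms(2) by simp
next
  case (step H1 H2)
  obtain V1 E1 where H1: "H1 = (V1, E1)" by (cases H1)
  from step.hyps(2) obtain v where v: "v \<in> V1" "hdegree E1 v < d"
     and H2: "H2 = (V1 - {v}, {e \<in> E1. v \<notin> e})"
    unfolding peel_step_def H1 by auto
  have rg: "r_graph r V1 E1" "V1 \<subseteq> V"
    and ie: "int (card E1) \<ge> int (card E) - (int d - 1) * int (card V - card V1)"
    using step.IH H1 by auto
  have fV: "finite V1" using rg unfolding r_graph_def by auto
  have fE: "finite E1"
    by (rule finite_subset[of _ "Pow V1"]) (use rg fV in \<open>auto simp: r_graph_def\<close>)
  have rg2: "r_graph r (V1 - {v}) {e \<in> E1. v \<notin> e}"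
    using rg unfolding r_graph_def by auto
  have split: "card E1 = card {e \<in> E1. v \<notin> e} + hdegree E1 v"
    unfolding hdegree_def
  proof -
    have "E1 = {e \<in> E1. v \<notin> e} \<union> {e \<in> E1. v \<in> e}" by auto
    hence "card E1 = card ({e \<in> E1. v \<notin> e} \<union> {e \<in> E1. v \<in> e})" by simp
    also have "\<dots> = card {e \<in> E1. v \<notin> e} + card {e \<in> E1. v \<in> e}"
      by (rule card_Un_disjoint) (use fE in auto)
    finally show "card E1 = card {e \<in> E1. v \<notin> e} + card {e \<in> E1. v \<in> e}" .
  qed
  have fVV: "finite V" using assms(2) unfolding r_graph_def by auto
  have cV1: "card V1 \<le> card V" using card_mono[OF fVV rg(2)] .
  have c2: "card (V1 - {v}) = card V1 - 1" using v fV by simp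
  have c1: "card V1 \<ge> 1" using v fV by (metis One_nat_def Suc_leI card_gt_0_iff empty_iff)
  have "int (card V - card (V1 - {v})) = int (card V - card V1) + 1"
    using c2 c1 cV1 by simp
  moreover have "int (hdegree E1 v) \<le> int d - 1" using v by simp
  ultimately show ?case using H2 rg2 rg ie split
    by (auto simp: algebra_simps)
qed

theorem mainTheorem3:
  fixes r k n :: nat and V :: "'a set" and E :: "'a set set"
    and V' :: "'a set" and E' :: "'a set set"
  assumes "r \<ge> 3" and "k \<ge> 2 * r + 13"
    and "r_graph r V E" and "card V = n"
    and "\<not> has_berge_path V E k"
    and "int n > int ((r * (k - 1)) choose r) + int ((((k - 1) div 2) choose (r - 1)) * ((k - 1) div 2))
           - int (((k - 1) div 2) choose r)
           - (if even k then int (((k - 1) div 2) choose (r - 2)) else 0)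
           + int (r * (k - 1))"
    and "int (card E) \<ge> int (((k - 1) div 2) choose (r - 1)) * (int n - int ((k - 1) div 2))
           + int (((k - 1) div 2) choose r)
           + (if even k then int (((k - 1) div 2) choose (r - 2)) else 0)"
    and "peel_result (((k - 1) div 2) choose (r - 1)) (V, E) (V', E')"
  shows "card V' \<ge> r * (k - 1) \<and> (\<forall>v\<in>V'. hdegree E' v \<ge> ((k - 1) div 2) choose (r - 1))"
proof
  show "\<forall>v\<in>V'. hdegree E' v \<ge> ((k - 1) div 2) choose (r - 1)"
    using assms(8) unfolding peel_result_def by auto
  define m where "m = (k - 1) div 2"
  define d where "d = m choose (r - 1)"
  define A where "A = r * (k - 1)"
  define I where "I = (if even k then int (m choose (r - 2)) else 0)"
  have inv: "r_graph r V' E' \<and> V' \<subseteq> V \<and>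
         int (card E') \<ge> int (card E) - (int d - 1) * int (card V - card V')"
    using peel_inv[OF _ assms(3), of d "(V', E')"] assms(8)
    unfolding peel_result_def d_def m_def by auto
  have fV: "finite V" using assms(3) unfolding r_graph_def by auto
  have sle: "card V' \<le> n" using card_mono[OF fV] inv assms(4) by auto
  have fV': "finite V'" using inv unfolding r_graph_def by auto
  have Eup: "card E' \<le> card V' choose r"
  proof -
    have "E' \<subseteq> {K. K \<subseteq> V' \<and> card K = r}" using inv unfolding r_graph_def by auto
    hence "card E' \<le> card {K. K \<subseteq> V' \<and> card K = r}"
      by (rule card_mono[rotated]) (use fV' in simp)
    thus ?thesis using n_subsets[OF fV'] by simp
  qed
  show "card V' \<ge> r * (k - 1)"
  proof (rule ccontr)
    assume "\<not> ?thesis"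
    hence lt: "card V' < A" unfolding A_def by simp
    have Eup2: "int (card E') \<le> int (A choose r)"
      using Eup choose_mono_n[of "card V'" A r] lt by simp
    define s where "s = int (card V')"
    define t where "t = int n - s"
    have tgt: "t > int n - int A" using lt unfolding t_def s_def by simp
    have s0: "s \<ge> 0" unfolding s_def by simp
    have d0: "int d \<ge> 0" by simp
    have low: "int (card E') \<ge> int d * (int n - int m) + int (m choose r) + I - (int d - 1) * t"
      using inv assms(7) assms(4) sle unfolding t_def s_def d_def m_def I_def by (simp add: of_nat_diff)
    have eq: "int d * (int n - int m) - (int d - 1) * t = int d * s - int d * int m + t"
      unfolding t_def by (simp add: algebra_simps)
    have "int d * s \<ge> 0" using s0 d0 by simp
    hence "int (card E') \<ge> t - int d * int m + int (m choose r) + I" using low eq by linarith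
    moreover have "int n > int (A choose r) + int (d * m) - int (m choose r) - I + int A"
      using assms(6) unfolding A_def d_def m_def I_def by simp
    ultimately show False using Eup2 tgt by (simp add: of_nat_mult) 
  qed
qed

end
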